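(* Let $\mathcal B$ be a multiplicative family of entourages on a set $X$. For all integers $n\ge k>1$ and all $U_1,\dots,U_n\in\mathcal B$, $$\Pi(U_1,\dots,U_n)=\Pi(U_1,\dots,U_{k-1},\Pi(U_k,\dots,U_n)).$$
   Context: An entourage on $X$ is a subset of $X\times X$ containing the diagonal; $U\circ V=\{(x,z):\exists y\,((x,y)\in U,(y,z)\in V)\}$. A family $\mathcal B$ of entourages is multiplicative if $U\circ V\in\mathcal B$ whenever $U,V\in\mathcal B$. The balanced product is defined recursively: $\Pi(U_1)=U_1$ and, for $n>1$, $\Pi(U_1,\dots,U_n)=\Pi(U_2,\dots,U_n)\circ U_1\circ\Pi(U_2,\dots,U_n)$. *)

theory Defs
  imports Main
begin

definition entourage :: "'a set \<Rightarrow> 'a rel \<Rightarrow> bool" where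
  "entourage X U \<longleftrightarrow> U \<subseteq> X \<times> X \<and> Id_on X \<subseteq> U"

definition multiplicative :: "'a rel set \<Rightarrow> bool" where
  "multiplicative \<B> \<longleftrightarrow> (\<forall>U\<in>\<B>. \<forall>V\<in>\<B>. U O V \<in> \<B>)"

text \<open>Balanced product of a nonempty list [U1,...,Un]; the empty list is never used.\<close>
fun bprod :: "'a rel list \<Rightarrow> 'a rel" where
  "bprod [] = Id"
| "bprod [U] = U"
| "bprod (U # V # Us) = bprod (V # Us) O U O bprod (V # Us)"

end

theory Submission
  imports Defs
begin

lemma bprod_cons: "bprod (a # l) = (if l = [] then a else bprod l O a O bprod l)"
  by (cases l) auto

lemma bprod_app: "ys \<noteq> [] \<Longrightarrow> bprod (xs @ ys) = bprod (xs @ [bprod ys])"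
  by (induction xs) (auto simp: bprod_cons)

theorem lemma1p7:
  fixes X :: "'a set" and \<B> :: "'a rel set" and Us :: "'a rel list" and k :: nat
  assumes "\<forall>U\<in>\<B>. entourage X U"
    and "multiplicative \<B>"
    and "set Us \<subseteq> \<B>"
    and "1 < k" and "k \<le> length Us"
  shows "bprod Us = bprod (take (k - 1) Us @ [bprod (drop (k - 1) Us)])"
proof -
  have "drop (k - 1) Us \<noteq> []" using assms(4,5) by simp
  from bprod_app[OF this, of "take (k - 1) Us"] show ?thesis by simp
qed

end
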